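(* For every $0<r<1$ there is an open set $U\subseteq2^\omega$ which is dualistic and satisfies $\mu(U)=\mu(\operatorname{Cl}U)=r$; moreover $\operatorname{Cl}U$ is also dualistic.
   Context: $2^{\omega}$ is the Cantor space; $N_s=\{x\in2^\omega:s\subset x\}$; $\mu$ is the coin-tossing measure, $\mu(N_s)=2^{-\mathrm{lh}(s)}$. For measurable $A$, $\mathcal{D}_A(z)=\lim_n\mu(A\cap N_{z\restriction n})/\mu(N_{z\restriction n})$ when the limit exists. $A$ is dualistic if for every $z\in2^\omega$ the limit $\mathcal{D}_A(z)$ exists and belongs to $\{0,1\}$. *)

theory Defs
  imports "HOL-Probability.Probability"
begin

text \<open>Cantor space is the type nat \<Rightarrow> bool with the library product topology
  (bool carries its order topology, which is discrete).\<close>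

definition cantor_measure :: "(nat \<Rightarrow> bool) measure" where
  "cantor_measure = (\<Pi>\<^sub>M i\<in>(UNIV::nat set). measure_pmf (bernoulli_pmf (1/2)))"

definition cyl :: "(nat \<Rightarrow> bool) \<Rightarrow> nat \<Rightarrow> (nat \<Rightarrow> bool) set" where
  "cyl z n = {x. \<forall>i<n. x i = z i}"

definition density_seq :: "(nat \<Rightarrow> bool) set \<Rightarrow> (nat \<Rightarrow> bool) \<Rightarrow> nat \<Rightarrow> real" where
  "density_seq A z n = measure cantor_measure (A \<inter> cyl z n) / measure cantor_measure (cyl z n)"

definition dualistic :: "(nat \<Rightarrow> bool) set \<Rightarrow> bool" where
  "dualistic A \<longleftrightarrow> A \<in> sets cantor_measure \<and>
     (\<forall>z. \<exists>d\<in>{0,1}. density_seq A z \<longlonglongrightarrow> d)"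

end

theory Submission
  imports Defs
begin

abbreviation "B \<equiv> measure_pmf (bernoulli_pmf (1/2))"

lemma space_cantor[simp]: "space cantor_measure = UNIV"
  by (simp add: cantor_measure_def space_PiM)

lemma prob_cantor: "prob_space cantor_measure"
  unfolding cantor_measure_def by (rule prob_space_PiM) (simp add: prob_space_measure_pmf)

interpretation CM: prob_space cantor_measure by (rule prob_cantor)

lemma cyl_emb: "cyl z n = prod_emb UNIV (\<lambda>_. B) {..<n} (Pi\<^sub>E {..<n} (\<lambda>i. {z i}))"
proof (rule set_eqI)
  fix x :: "nat \<Rightarrow> bool"
  have "x \<in> prod_emb UNIV (\<lambda>_. B) {..<n} (Pi\<^sub>E {..<n} (\<lambda>i. {z i})) \<longleftrightarrow>
        restrict x {..<n} \<in> Pi\<^sub>E {..<n} (\<lambda>i. {z i})"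
    by (simp add: prod_emb_iff)
  also have "\<dots> \<longleftrightarrow> (\<forall>i<n. x i = z i)"
    unfolding restrict_PiE_iff by (simp only: singleton_iff lessThan_iff Ball_def)
  finally show "x \<in> cyl z n \<longleftrightarrow> x \<in> prod_emb UNIV (\<lambda>_. B) {..<n} (Pi\<^sub>E {..<n} (\<lambda>i. {z i}))"
    by (simp add: cyl_def)
qed

lemma cyl_sets[simp]: "cyl z n \<in> sets cantor_measure"
  unfolding cyl_emb cantor_measure_def by (rule sets_PiM_I) auto

lemma cyl_measure: "measure cantor_measure (cyl z n) = (1/2)^n"
proof -
  have "emeasure cantor_measure (cyl z n) = (\<Prod>i\<in>{..<n}. emeasure B {z i})"
    unfolding cyl_emb cantor_measure_def
    by (rule emeasure_PiM_emb) (auto simp: prob_space_measure_pmf)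
  also have "\<dots> = (\<Prod>i\<in>{..<n}. ennreal (1/2))"
    by (intro prod.cong refl) (auto simp: emeasure_pmf_single)
  also have "\<dots> = ennreal (1/2) ^ n" by simp
  also have "\<dots> = ennreal ((1/2)^n)" by (simp only: ennreal_power)
  finally show ?thesis by (simp add: measure_def)
qed

lemma open_cyl: "open (cyl z n)"
proof -
  have "cyl z n = (\<Inter>t\<in>{..<n}. (\<lambda>x. x t) -` {z t})" by (auto simp: cyl_def)
  moreover have "open ((\<lambda>x::nat\<Rightarrow>bool. x t) -` {z t})" for t
    by (rule open_vimage) (auto simp: discrete_topology_class.open_discrete)
  ultimately show ?thesis by auto
qed

lemma self_cyl[simp]: "z \<in> cyl z n" by (simp add: cyl_def)

lemma floor_double: "\<lfloor>2*y\<rfloor> = 2*\<lfloor>y\<rfloor> \<or> \<lfloor>2*y\<rfloor> = 2*\<lfloor>y\<rfloor>+1" for y :: real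
proof -
  have a: "2*\<lfloor>y\<rfloor> \<le> \<lfloor>2*y\<rfloor>" by (simp add: le_floor_iff)
  have b: "\<lfloor>2*y\<rfloor> < 2*\<lfloor>y\<rfloor> + 2"
    using floor_less_iff[of "2*y" "2*\<lfloor>y\<rfloor> + 2"] real_of_int_floor_add_one_gt[of y] by linarith
  from a b show ?thesis by linarith
qed

definition dig :: "real \<Rightarrow> nat \<Rightarrow> bool" where "dig r i = odd \<lfloor>2^i * r\<rfloor>"
definition mcnt :: "real \<Rightarrow> nat \<Rightarrow> nat" where "mcnt r i = card {j. j < i \<and> dig r j}"
definition zcnt :: "real \<Rightarrow> nat \<Rightarrow> nat" where "zcnt r i = card {j. j < i \<and> \<not> dig r j}"
definition Cs :: "real \<Rightarrow> nat \<Rightarrow> (nat \<Rightarrow> bool) set" where "Cs r i = cyl (\<lambda>t. t = mcnt r i) i"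
definition As :: "real \<Rightarrow> nat \<Rightarrow> (nat \<Rightarrow> bool) set" where "As r i = (if dig r i then Cs r i else {})"
definition Us :: "real \<Rightarrow> (nat \<Rightarrow> bool) set" where "Us r = (\<Union>i. As r i)"

lemma par_key: "b = 2*a \<or> b = 2*a+1 \<Longrightarrow> b = 2*a + (if odd b then 1 else (0::int))"
  by auto

lemma fl_step: "\<lfloor>2^(Suc n) * r\<rfloor> = 2 * \<lfloor>2^n * r\<rfloor> + (if dig r (Suc n) then 1 else 0)"
proof -
  have e: "2^(Suc n) * r = 2 * (2^n * r)" by simp
  have "\<lfloor>2^(Suc n) * r\<rfloor> = 2 * \<lfloor>2^n * r\<rfloor> \<or> \<lfloor>2^(Suc n) * r\<rfloor> = 2 * \<lfloor>2^n * r\<rfloor> + 1"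
    unfolding e by (rule floor_double)
  then show ?thesis unfolding dig_def by (rule par_key)
qed

context fixes r :: real assumes r0: "0 < r" and r1: "r < 1"
begin

lemma dig0: "\<not> dig r 0"
proof -
  have "\<lfloor>r\<rfloor> = 0" using r0 r1 by (simp add: floor_eq_iff)
  then show ?thesis by (simp add: dig_def)
qed

lemma psum: "(\<Sum>i<Suc n. if dig r i then (1/2)^i else 0) = \<lfloor>2^n * r\<rfloor> / 2^n"
proof (induction n)
  case 0
  have "\<lfloor>r\<rfloor> = 0" using r0 r1 by (simp add: floor_eq_iff)
  then show ?case using dig0 by simp
next
  case (Suc n)
  have "(\<Sum>i<Suc (Suc n). if dig r i then (1/2::real)^i else 0)
      = \<lfloor>2^n * r\<rfloor> / 2^n + (if dig r (Suc n) then (1/2)^(Suc n) else 0)"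
    using Suc by simp
  also have "\<dots> = \<lfloor>2^(Suc n) * r\<rfloor> / 2^(Suc n)"
    unfolding fl_step by (auto simp: field_simps power_divide)
  finally show ?case .
qed

lemma approx_lim: "(\<lambda>n. \<lfloor>2^n * r\<rfloor> / 2^n) \<longlonglongrightarrow> r"
proof (rule tendsto_sandwich[of "\<lambda>n. r - (1/2)^n" _ _ "\<lambda>n. r"])
  show "\<forall>\<^sub>F n in sequentially. r - (1/2)^n \<le> \<lfloor>2^n * r\<rfloor> / 2^n"
  proof (intro always_eventually allI)
    fix n :: nat
    have "2^n * r - 1 \<le> \<lfloor>2^n * r\<rfloor>" by linarith
    then have "(2^n * r - 1) / 2^n \<le> \<lfloor>2^n * r\<rfloor> / (2::real)^n"
      by (intro divide_right_mono) auto
    moreover have "(2^n * r - 1) / 2^n = r - (1/2::real)^n"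
      by (simp add: field_simps power_divide)
    ultimately show "r - (1/2)^n \<le> \<lfloor>2^n * r\<rfloor> / 2^n" by simp
  qed
  show "\<forall>\<^sub>F n in sequentially. \<lfloor>2^n * r\<rfloor> / 2^n \<le> r"
  proof (intro always_eventually allI)
    fix n :: nat
    have "\<lfloor>2^n * r\<rfloor> \<le> 2^n * r" by linarith
    then show "\<lfloor>2^n * r\<rfloor> / 2^n \<le> r" by (simp add: field_simps)
  qed
  have "(\<lambda>n. r - (1/2::real)^n) \<longlonglongrightarrow> r - 0"
    by (intro tendsto_intros) simp
  then show "(\<lambda>n. r - (1/2::real)^n) \<longlonglongrightarrow> r" by (simp only: diff_zero)
qed (rule tendsto_const)

lemma dig_sums: "(\<lambda>i. if dig r i then (1/2::real)^i else 0) sums r"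
  unfolding sums_def
  by (rule LIMSEQ_imp_Suc) (use approx_lim in \<open>simp only: psum\<close>)

lemma inf_zeros: "\<exists>j\<ge>N. \<not> dig r j"
proof (rule ccontr)
  assume "\<not> ?thesis"
  then have all: "\<And>j. j \<ge> N \<Longrightarrow> dig r j" by auto
  define b where "b n = (\<lfloor>2^n * r\<rfloor> + 1) / (2::real)^n" for n
  have bk: "b (k + N) = b N" for k
  proof (induction k)
    case (Suc k)
    have "dig r (Suc (k + N))" using all by simp
    then have "b (Suc (k + N)) = b (k + N)"
      unfolding b_def fl_step by (simp add: field_simps)
    then show ?case using Suc by simp
  qed simp
  have beq: "b = (\<lambda>n. \<lfloor>2^n * r\<rfloor> / 2^n + (1/2)^n)"
    by (rule ext) (simp add: b_def add_divide_distrib power_divide)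
  have "b \<longlonglongrightarrow> r + 0"
    unfolding beq by (intro tendsto_intros approx_lim) simp
  then have "(\<lambda>k. b (k + N)) \<longlonglongrightarrow> r" by (simp add: LIMSEQ_ignore_initial_segment)
  then have "(\<lambda>k. b N) \<longlonglongrightarrow> r" by (simp add: bk)
  then have "b N = r" by (simp add: LIMSEQ_const_iff)
  moreover have "b N > r"
  proof -
    have "2^N * r < \<lfloor>2^N * r\<rfloor> + 1" by linarith
    then show ?thesis unfolding b_def by (simp add: field_simps)
  qed
  ultimately show False by simp
qed

lemma mz_sum: "mcnt r i + zcnt r i = i"
proof -
  have "{j. j < i \<and> dig r j} \<union> {j. j < i \<and> \<not> dig r j} = {..<i}" by auto
  moreover have "card ({j. j < i \<and> dig r j} \<union> {j. j < i \<and> \<not> dig r j})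
     = card {j. j < i \<and> dig r j} + card {j. j < i \<and> \<not> dig r j}"
    by (rule card_Un_disjoint) auto
  ultimately show ?thesis unfolding mcnt_def zcnt_def by simp
qed

lemma zcnt_mono: "n \<le> i \<Longrightarrow> zcnt r n \<le> zcnt r i"
  unfolding zcnt_def by (rule card_mono) auto

lemma mcnt_less: "dig r i \<Longrightarrow> mcnt r i < i"
proof -
  assume d: "dig r i"
  have "{j. j < i \<and> dig r j} \<subseteq> {1..<i}" using dig0 by (auto simp: Suc_le_eq) (metis gr0I)
  then have "mcnt r i \<le> card {1..<i}" unfolding mcnt_def by (intro card_mono) auto
  moreover have "i \<noteq> 0" using d dig0 by metis
  ultimately show ?thesis by (cases i) auto
qed

lemma mcnt_strict: "dig r i \<Longrightarrow> i < i' \<Longrightarrow> mcnt r i < mcnt r i'"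
  unfolding mcnt_def by (rule psubset_card_mono) auto

lemma mcnt_inj: "dig r i \<Longrightarrow> dig r i' \<Longrightarrow> mcnt r i = mcnt r i' \<Longrightarrow> i = i'"
  by (metis less_irrefl linorder_neqE_nat mcnt_strict)

lemma z_unbounded: "\<exists>N. K \<le> zcnt r N"
proof (induction K)
  case (Suc K)
  then obtain N where N: "K \<le> zcnt r N" by auto
  obtain j where j: "j \<ge> N" "\<not> dig r j" using inf_zeros by auto
  have "insert j {j'. j' < N \<and> \<not> dig r j'} \<subseteq> {j'. j' < Suc j \<and> \<not> dig r j'}" using j by auto
  then have "card (insert j {j'. j' < N \<and> \<not> dig r j'}) \<le> zcnt r (Suc j)"
    unfolding zcnt_def by (intro card_mono) auto
  moreover have "card (insert j {j'. j' < N \<and> \<not> dig r j'}) = Suc (zcnt r N)"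
    unfolding zcnt_def using j by (subst card_insert_disjoint) auto
  ultimately show ?case using N by (intro exI[of _ "Suc j"]) simp
qed simp

lemma z_tendsto: "filterlim (zcnt r) at_top sequentially"
  unfolding filterlim_at_top eventually_sequentially
proof
  fix K
  obtain N where "K \<le> zcnt r N" using z_unbounded by auto
  then show "\<exists>N. \<forall>n\<ge>N. K \<le> zcnt r n" using zcnt_mono by (meson order_trans)
qed

lemma Cs_mem: "x \<in> Cs r i \<longleftrightarrow> (\<forall>t<i. x t = (t = mcnt r i))"
  by (simp add: Cs_def cyl_def)

lemma Us_mem: "x \<in> Us r \<longleftrightarrow> (\<exists>i. dig r i \<and> x \<in> Cs r i)"
  by (auto simp: Us_def As_def split: if_splits)

lemma As_disj: "disjoint_family (As r)"
  unfolding disjoint_family_on_def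
proof (intro ballI impI)
  fix i i' :: nat assume "i \<noteq> i'"
  have *: False if "dig r i" "dig r i'" "i < i'" "x \<in> Cs r i" "x \<in> Cs r i'" for i i' x
  proof -
    have "x (mcnt r i)" using that(4) mcnt_less[OF that(1)] by (simp add: Cs_mem)
    moreover have "mcnt r i < i'" using mcnt_less[OF that(1)] that(3) by simp
    moreover have "mcnt r i \<noteq> mcnt r i'" using mcnt_strict[OF that(1,3)] by simp
    ultimately show False using that(5) by (simp add: Cs_mem)
  qed
  show "As r i \<inter> As r i' = {}"
    using `i \<noteq> i'` *[of i i'] *[of i' i] by (auto simp: As_def) (metis linorder_neqE_nat)
qed

lemma As_sets: "As r i \<in> sets cantor_measure"
  by (simp add: As_def Cs_def)

lemma Us_sets: "Us r \<in> sets cantor_measure"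
  unfolding Us_def using As_sets by auto

lemma Us_open: "open (Us r)"
  unfolding Us_def As_def Cs_def using open_cyl by auto

lemma Us_measure: "measure cantor_measure (Us r) = r"
proof -
  have "(\<lambda>i. measure cantor_measure (As r i)) sums measure cantor_measure (\<Union>i. As r i)"
    by (rule CM.finite_measure_UNION) (use As_sets As_disj in auto)
  moreover have "(\<lambda>i. measure cantor_measure (As r i)) = (\<lambda>i. if dig r i then (1/2)^i else 0)"
    by (auto simp: As_def Cs_def cyl_measure)
  ultimately show ?thesis using dig_sums unfolding Us_def by (metis sums_unique2)
qed

definition zs :: "nat \<Rightarrow> bool" where "zs = (\<lambda>_. False)"

lemma cyl_mono: "x \<in> cyl z n \<Longrightarrow> m \<le> n \<Longrightarrow> x \<in> cyl z m"
  by (simp add: cyl_def)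

lemma first_true: "z \<noteq> zs \<Longrightarrow> \<exists>k. z k \<and> (\<forall>t<k. \<not> z t)"
proof -
  assume "z \<noteq> zs"
  then have "\<exists>k. z k" by (auto simp: zs_def)
  then obtain k where "z k" "\<And>t. t < k \<Longrightarrow> \<not> z t"
    using exists_least_iff[of z] by blast
  then show ?thesis by blast
qed

lemma m_eq_k:
  assumes d: "dig r i" and x: "x \<in> Cs r i" and xc: "x \<in> cyl z n" and kn: "k < n"
    and zk: "z k" and zmin: "\<forall>t<k. \<not> z t"
  shows "mcnt r i = k"
proof (rule ccontr)
  assume ne: "mcnt r i \<noteq> k"
  have mi: "mcnt r i < i" using mcnt_less[OF d] .
  have xm: "x (mcnt r i)" using x mi by (simp add: Cs_mem)
  show False
  proof (cases "mcnt r i < k")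
    case True
    then have "x (mcnt r i) = z (mcnt r i)" using xc kn by (simp add: cyl_def)
    then show False using xm zmin True by simp
  next
    case False
    then have "k < mcnt r i" using ne by simp
    then have "x k = (k = mcnt r i)" using x mi by (simp add: Cs_mem)
    moreover have "x k = z k" using xc kn by (simp add: cyl_def)
    ultimately show False using zk `k < mcnt r i` by simp
  qed
qed

lemma claim:
  assumes zk: "z k" and zmin: "\<forall>t<k. \<not> z t"
  shows "\<exists>N. (\<forall>n\<ge>N. Us r \<inter> cyl z n = {}) \<or> (\<forall>n\<ge>N. cyl z n \<subseteq> Us r)"
proof (cases "\<exists>i. dig r i \<and> mcnt r i = k")
  case True
  then obtain i where i: "dig r i" "mcnt r i = k" by auto
  show ?thesis
  proof (cases "z \<in> Cs r i")
    case True
    have "cyl z n \<subseteq> Us r" if "n \<ge> i" for n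
    proof
      fix y assume "y \<in> cyl z n"
      then have "y \<in> Cs r i" using True that by (auto simp: Cs_mem cyl_def)
      then show "y \<in> Us r" using i by (auto simp: Us_mem)
    qed
    then show ?thesis by blast
  next
    case False
    have "Us r \<inter> cyl z n = {}" if "n \<ge> max (Suc k) i" for n
    proof (rule ccontr)
      assume "Us r \<inter> cyl z n \<noteq> {}"
      then obtain x i' where x: "dig r i'" "x \<in> Cs r i'" "x \<in> cyl z n" by (auto simp: Us_mem)
      have "mcnt r i' = k" by (rule m_eq_k[OF x]) (use that zk zmin in auto)
      then have "i' = i" using mcnt_inj[OF x(1) i(1)] i(2) by simp
      then have "z \<in> Cs r i" using x that by (auto simp: Cs_mem cyl_def)
      then show False using False by simp
    qed
    then show ?thesis by blast
  qed
next
  case False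
  have "Us r \<inter> cyl z n = {}" if "n \<ge> Suc k" for n
  proof (rule ccontr)
    assume "Us r \<inter> cyl z n \<noteq> {}"
    then obtain x i' where x: "dig r i'" "x \<in> Cs r i'" "x \<in> cyl z n" by (auto simp: Us_mem)
    have "mcnt r i' = k" by (rule m_eq_k[OF x]) (use that zk zmin in auto)
    then show False using False x(1) by blast
  qed
  then show ?thesis by blast
qed

lemma closure_sub: "closure (Us r) \<subseteq> Us r \<union> {zs}"
proof
  fix z assume zc: "z \<in> closure (Us r)"
  show "z \<in> Us r \<union> {zs}"
  proof (rule ccontr)
    assume "z \<notin> Us r \<union> {zs}"
    then have nU: "z \<notin> Us r" and nz: "z \<noteq> zs" by auto
    obtain k where k: "z k" "\<forall>t<k. \<not> z t" using first_true[OF nz] by auto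
    obtain N where N: "(\<forall>n\<ge>N. Us r \<inter> cyl z n = {}) \<or> (\<forall>n\<ge>N. cyl z n \<subseteq> Us r)"
      using claim[OF k] by auto
    then show False
    proof
      assume "\<forall>n\<ge>N. Us r \<inter> cyl z n = {}"
      then have "cyl z N \<inter> Us r = {}" by auto
      then have "cyl z N \<inter> closure (Us r) = {}" using open_Int_closure_eq_empty[OF open_cyl] by blast
      then show False using zc self_cyl by blast
    next
      assume "\<forall>n\<ge>N. cyl z n \<subseteq> Us r"
      then show False using nU self_cyl by blast
    qed
  qed
qed

lemma zs_sets: "{zs} \<in> sets cantor_measure"
proof -
  have "{zs} = (\<Inter>n. cyl zs n)"
  proof
    show "{zs} \<subseteq> (\<Inter>n. cyl zs n)" by auto
    show "(\<Inter>n. cyl zs n) \<subseteq> {zs}"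
    proof
      fix x assume "x \<in> (\<Inter>n. cyl zs n)"
      then have "\<forall>t. x t = zs t" by (auto simp: cyl_def)
      then show "x \<in> {zs}" by auto
    qed
  qed
  also have "\<dots> \<in> sets cantor_measure" by (rule sets.countable_INT) auto
  finally show ?thesis .
qed

lemma zs_null: "measure cantor_measure {zs} = 0"
proof -
  have le: "measure cantor_measure {zs} \<le> (1/2)^n" for n
  proof -
    have "measure cantor_measure {zs} \<le> measure cantor_measure (cyl zs n)"
      by (rule CM.finite_measure_mono) auto
    then show ?thesis by (simp add: cyl_measure)
  qed
  have "(\<lambda>n. (1/2::real)^n) \<longlonglongrightarrow> 0" by (rule LIMSEQ_power_zero) simp
  then have "measure cantor_measure {zs} \<le> 0"
    by (rule LIMSEQ_le_const) (use le in auto)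
  then show ?thesis using measure_nonneg[of cantor_measure "{zs}"] by linarith
qed

lemma closure_sets: "closure (Us r) \<in> sets cantor_measure"
proof -
  have eq: "closure (Us r) = Us r \<union> (closure (Us r) \<inter> {zs})"
    using closure_sub closure_subset by blast
  have "closure (Us r) \<inter> {zs} \<in> sets cantor_measure"
    by (cases "zs \<in> closure (Us r)") (auto simp: zs_sets)
  then show ?thesis by (subst eq) (intro sets.Un Us_sets)
qed

lemma closure_measure_Int:
  assumes A: "A \<in> sets cantor_measure"
  shows "measure cantor_measure (closure (Us r) \<inter> A) = measure cantor_measure (Us r \<inter> A)"
proof -
  have eq: "closure (Us r) \<inter> A = (Us r \<inter> A) \<union> (closure (Us r) \<inter> A \<inter> {zs})"
    using closure_sub closure_subset by blast
  have T: "closure (Us r) \<inter> A \<inter> {zs} \<in> sets cantor_measure"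
    using closure_sets A zs_sets by auto
  have "measure cantor_measure (closure (Us r) \<inter> A \<inter> {zs}) \<le> measure cantor_measure {zs}"
    by (rule CM.finite_measure_mono) (auto simp: zs_sets)
  then have T0: "measure cantor_measure (closure (Us r) \<inter> A \<inter> {zs}) = 0"
    using zs_null measure_nonneg[of cantor_measure "closure (Us r) \<inter> A \<inter> {zs}"] by linarith
  show ?thesis
    by (subst eq, rule CM.measure_zero_union[OF _ T T0]) (use Us_sets A in auto)
qed

lemma closure_density: "density_seq (closure (Us r)) z n = density_seq (Us r) z n"
  unfolding density_seq_def using closure_measure_Int[OF cyl_sets] by simp

lemma density_zs: "density_seq (Us r) zs \<longlonglongrightarrow> 0"
proof -
  define g where "g n = n + zcnt r n" for n
  define A' where "A' n i = (if g n \<le> i then As r i else {})" for n i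
  have bound: "density_seq (Us r) zs n \<le> 2 * (1/2)^(zcnt r n)" for n
  proof -
    have sub: "Us r \<inter> cyl zs n \<subseteq> (\<Union>i. A' n i)"
    proof
      fix x assume "x \<in> Us r \<inter> cyl zs n"
      then obtain i where i: "dig r i" "x \<in> Cs r i" "x \<in> cyl zs n" by (auto simp: Us_mem)
      have mi: "mcnt r i < i" using mcnt_less[OF i(1)] .
      have xm: "x (mcnt r i)" using i(2) mi by (simp add: Cs_mem)
      have "n \<le> mcnt r i"
      proof (rule ccontr)
        assume "\<not> n \<le> mcnt r i"
        then have "x (mcnt r i) = zs (mcnt r i)" using i(3) by (simp add: cyl_def)
        then show False using xm by (simp add: zs_def)
      qed
      then have "n \<le> i" using mi by simp
      then have "zcnt r n \<le> zcnt r i" by (rule zcnt_mono)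
      then have "g n \<le> i" using mz_sum[of i] `n \<le> mcnt r i` unfolding g_def by linarith
      then show "x \<in> (\<Union>i. A' n i)" using i by (auto simp: A'_def As_def)
    qed
    have Asets: "A' n i \<in> sets cantor_measure" for i by (simp add: A'_def As_sets)
    have Adisj: "disjoint_family (A' n)"
      using As_disj unfolding disjoint_family_on_def A'_def by auto
    have s1: "(\<lambda>i. measure cantor_measure (A' n i)) sums measure cantor_measure (\<Union>i. A' n i)"
      by (rule CM.finite_measure_UNION) (use Asets Adisj in auto)
    define h where "h i = (if g n \<le> i then (1/2::real)^i else 0)" for i
    have "(\<lambda>i. (1/2::real)^(g n) * (1/2)^i) sums ((1/2)^(g n) * (1 / (1 - 1/2)))"
      by (intro sums_mult geometric_sums) simp
    then have "(\<lambda>i. h (i + g n)) sums ((1/2)^(g n) * 2)"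
      by (simp add: h_def power_add mult.commute)
    then have s2: "h sums ((1/2)^(g n) * 2)"
      by (subst (asm) sums_zero_iff_shift) (auto simp: h_def)
    have le: "measure cantor_measure (A' n i) \<le> h i" for i
      by (auto simp: A'_def As_def Cs_def cyl_measure h_def)
    have "measure cantor_measure (\<Union>i. A' n i) \<le> (1/2)^(g n) * 2"
      by (rule sums_le[OF le s1 s2])
    moreover have "measure cantor_measure (Us r \<inter> cyl zs n) \<le> measure cantor_measure (\<Union>i. A' n i)"
      by (rule CM.finite_measure_mono[OF sub]) (use Asets in auto)
    ultimately have "measure cantor_measure (Us r \<inter> cyl zs n) \<le> (1/2)^(g n) * 2" by linarith
    then have "density_seq (Us r) zs n \<le> (1/2)^(g n) * 2 / (1/2)^n"
      unfolding density_seq_def cyl_measure by (intro divide_right_mono) auto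
    also have "\<dots> = 2 * (1/2)^(zcnt r n)" by (simp add: g_def power_add)
    finally show ?thesis .
  qed
  have nn: "density_seq (Us r) zs n \<ge> 0" for n by (simp add: density_seq_def)
  have "(\<lambda>k. (1/2::real)^k) \<longlonglongrightarrow> 0" by (rule LIMSEQ_power_zero) simp
  then have "(\<lambda>n. (1/2::real)^(zcnt r n)) \<longlonglongrightarrow> 0" by (rule filterlim_compose[OF _ z_tendsto])
  then have t: "(\<lambda>n. 2 * (1/2::real)^(zcnt r n)) \<longlonglongrightarrow> 2 * 0" by (intro tendsto_intros)
  show ?thesis
    by (rule Lim_null_comparison[of _ "\<lambda>n. 2 * (1/2::real)^(zcnt r n)"])
       (use bound nn t in auto)
qed

lemma density_other:
  assumes "z \<noteq> zs" shows "\<exists>d\<in>{0,1}. density_seq (Us r) z \<longlonglongrightarrow> d"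
proof -
  obtain k where k: "z k" "\<forall>t<k. \<not> z t" using first_true[OF assms] by auto
  obtain N where N: "(\<forall>n\<ge>N. Us r \<inter> cyl z n = {}) \<or> (\<forall>n\<ge>N. cyl z n \<subseteq> Us r)"
    using claim[OF k] by auto
  then show ?thesis
  proof
    assume h: "\<forall>n\<ge>N. Us r \<inter> cyl z n = {}"
    have "eventually (\<lambda>n. density_seq (Us r) z n = 0) sequentially"
      unfolding eventually_sequentially density_seq_def using h by (intro exI[of _ N]) simp
    then have "density_seq (Us r) z \<longlonglongrightarrow> 0" by (rule tendsto_eventually)
    then show ?thesis by auto
  next
    assume h: "\<forall>n\<ge>N. cyl z n \<subseteq> Us r"
    have "eventually (\<lambda>n. density_seq (Us r) z n = 1) sequentially"
      unfolding eventually_sequentially density_seq_def using h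
      by (intro exI[of _ N]) (simp add: Int_absorb1 cyl_measure)
    then have "density_seq (Us r) z \<longlonglongrightarrow> 1" by (rule tendsto_eventually)
    then show ?thesis by auto
  qed
qed

lemma Us_dualistic: "dualistic (Us r)"
  unfolding dualistic_def
proof (intro conjI allI Us_sets)
  fix z
  show "\<exists>d\<in>{0,1}. density_seq (Us r) z \<longlonglongrightarrow> d"
  proof (cases "z = zs")
    case True then show ?thesis using density_zs by auto
  next
    case False then show ?thesis by (rule density_other)
  qed
qed

lemma closure_dualistic: "dualistic (closure (Us r))"
  using Us_dualistic closure_sets unfolding dualistic_def closure_density by simp

lemma closure_meas: "measure cantor_measure (closure (Us r)) = r"
proof -
  have "UNIV \<in> sets cantor_measure" using sets.top[of cantor_measure] by simp
  then show ?thesis using closure_measure_Int[of UNIV] Us_measure by simp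
qed

end
theorem proposition3p9:
  fixes r :: real
  assumes "0 < r" and "r < 1"
  shows "\<exists>U :: (nat \<Rightarrow> bool) set. open U \<and> dualistic U \<and>
           measure cantor_measure U = r \<and> measure cantor_measure (closure U) = r \<and>
           dualistic (closure U)"
proof (intro exI[of _ "Us r"] conjI)
  show "open (Us r)" by (rule Us_open[OF assms])
  show "dualistic (Us r)" by (rule Us_dualistic[OF assms])
  show "measure cantor_measure (Us r) = r" by (rule Us_measure[OF assms])
  show "measure cantor_measure (closure (Us r)) = r" by (rule closure_meas[OF assms])
  show "dualistic (closure (Us r))" by (rule closure_dualistic[OF assms])
qed

end
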